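(* Let $\langle W,\varphi,(Y,\mathbb S,\sigma)\rangle$ be a monotone one-dimensional cocycle, $(X,\mathbb S_+,\pi)$ its skew-product dynamical system, $h=\mathrm{pr}_2$, and $\tau\in\mathbb S_+$, $\tau>0$. Suppose $x_0\in X$ has precompact semi-trajectory $\{\pi(t,x_0):t\in\mathbb S_+\}$ and $y_0:=h(x_0)$ is asymptotically $\tau$-periodic, i.e. there is a $\tau$-periodic point $q\in Y$ with $\lim_{t\to+\infty}\rho(\sigma(t,y_0),\sigma(t,q))=0$. Then $\tilde\omega_{x_0}=\omega_{x_0}\cap X_q$, where $X_q=h^{-1}(q)$.
   Context: $\mathbb S=\mathbb R$ or $\mathbb Z$, $\mathbb S_+=\{t\in\mathbb S:t\ge0\}$. $(Y,\mathbb S,\sigma)$ is a two-sided dynamical system on a complete metric space $Y$ (continuous $\sigma$, $\sigma(0,y)=y$, $\sigma(t+s,y)=\sigma(t,\sigma(s,y))$); $y$ is $\tau$-periodic if $\sigma(\tau,y)=y$. $W\subseteq\mathbb R$ is an interval. A cocycle over $\sigma$ with fibre $W$ is a continuous $\varphi:\mathbb S_+\times W\times Y\to W$ with $\varphi(0,u,y)=u$ and $\varphi(t+s,u,y)=\varphi(t,\varphi(s,u,y),\sigma(s,y))$; it is monotone if $u_1\le u_2$ implies $\varphi(t,u_1,y)\le\varphi(t,u_2,y)$ for all $t\in\mathbb S_+$, $y\in Y$. The skew-product system is $X=W\times Y$, $\pi(t,(u,y))=(\varphi(t,u,y),\sigma(t,y))$, $h(u,y)=y$. $\omega_{x}$ is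 the set of limits of $\pi(t_k,x)$ with $t_k\in\mathbb S_+$, $t_k\to+\infty$; $\tilde\omega_{x}$ is the set of limits of $\pi(k_n\tau,x)$ with $k_n\in\mathbb Z_+$, $k_n\to\infty$ (the $\omega$-limit set in the discretization $\tilde\pi(k,x)=\pi(k\tau,x)$). *)

theory Defs
  imports "HOL-Analysis.Analysis"
begin

definition time_set :: "real set \<Rightarrow> bool" where
  "time_set T \<longleftrightarrow> T = \<real> \<or> T = \<int>"

definition nonneg_times :: "real set \<Rightarrow> real set" where
  "nonneg_times T = {t \<in> T. t \<ge> 0}"

definition dyn_system :: "real set \<Rightarrow> (real \<Rightarrow> 'y::metric_space \<Rightarrow> 'y) \<Rightarrow> bool" where
  "dyn_system T \<sigma> \<longleftrightarrow>
     continuous_on (T \<times> UNIV) (\<lambda>(t, y). \<sigma> t y) \<and>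
     (\<forall>y. \<sigma> 0 y = y) \<and>
     (\<forall>t\<in>T. \<forall>s\<in>T. \<forall>y. \<sigma> (t + s) y = \<sigma> t (\<sigma> s y))"

definition cocycle :: "real set \<Rightarrow> real set \<Rightarrow> (real \<Rightarrow> real \<Rightarrow> 'y::metric_space \<Rightarrow> real)
     \<Rightarrow> (real \<Rightarrow> 'y \<Rightarrow> 'y) \<Rightarrow> bool" where
  "cocycle T W \<phi> \<sigma> \<longleftrightarrow>
     continuous_on (nonneg_times T \<times> W \<times> UNIV) (\<lambda>(t, u, y). \<phi> t u y) \<and>
     (\<forall>t\<in>nonneg_times T. \<forall>u\<in>W. \<forall>y. \<phi> t u y \<in> W) \<and>
     (\<forall>u\<in>W. \<forall>y. \<phi> 0 u y = u) \<and>
     (\<forall>t\<in>nonneg_times T. \<forall>s\<in>nonneg_times T. \<forall>u\<in>W. \<forall>y.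
        \<phi> (t + s) u y = \<phi> t (\<phi> s u y) (\<sigma> s y))"

definition monotone_cocycle :: "real set \<Rightarrow> real set \<Rightarrow> (real \<Rightarrow> real \<Rightarrow> 'y \<Rightarrow> real) \<Rightarrow> bool" where
  "monotone_cocycle T W \<phi> \<longleftrightarrow>
     (\<forall>u1\<in>W. \<forall>u2\<in>W. u1 \<le> u2 \<longrightarrow> (\<forall>t\<in>nonneg_times T. \<forall>y. \<phi> t u1 y \<le> \<phi> t u2 y))"

definition skew_product :: "(real \<Rightarrow> real \<Rightarrow> 'y \<Rightarrow> real) \<Rightarrow> (real \<Rightarrow> 'y \<Rightarrow> 'y)
     \<Rightarrow> real \<Rightarrow> real \<times> 'y \<Rightarrow> real \<times> 'y" where
  "skew_product \<phi> \<sigma> t x = (\<phi> t (fst x) (snd x), \<sigma> t (snd x))"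

definition omega_limit :: "real set \<Rightarrow> (real \<Rightarrow> 'x::topological_space \<Rightarrow> 'x) \<Rightarrow> 'x \<Rightarrow> 'x set" where
  "omega_limit T \<pi> x = {p. \<exists>tk::nat \<Rightarrow> real. (\<forall>k. tk k \<in> nonneg_times T) \<and>
      filterlim tk at_top sequentially \<and> (\<lambda>k. \<pi> (tk k) x) \<longlonglongrightarrow> p}"

definition discrete_omega_limit :: "real \<Rightarrow> (real \<Rightarrow> 'x::topological_space \<Rightarrow> 'x) \<Rightarrow> 'x \<Rightarrow> 'x set" where
  "discrete_omega_limit \<tau> \<pi> x = {p. \<exists>kn::nat \<Rightarrow> nat.
      filterlim kn at_top sequentially \<and> (\<lambda>n. \<pi> (real (kn n) * \<tau>) x) \<longlonglongrightarrow> p}"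

end

theory Submission imports Defs "HOL-Analysis.Kronecker_Approximation_Theorem" begin

lemma T_add: "time_set T \<Longrightarrow> a \<in> T \<Longrightarrow> b \<in> T \<Longrightarrow> a + b \<in> T"
  unfolding time_set_def by auto
lemma T_diff: "time_set T \<Longrightarrow> a \<in> T \<Longrightarrow> b \<in> T \<Longrightarrow> a - b \<in> T"
  unfolding time_set_def by auto
lemma T_zero: "time_set T \<Longrightarrow> 0 \<in> T"
  unfolding time_set_def by auto
lemma T_int_mult: "time_set T \<Longrightarrow> a \<in> T \<Longrightarrow> of_int k * a \<in> T"
  unfolding time_set_def by auto
lemma T_nat_mult: "time_set T \<Longrightarrow> a \<in> T \<Longrightarrow> of_nat k * a \<in> T"
  unfolding time_set_def by auto
lemma R_UNIV: "(\<real> :: real set) = UNIV"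
  using Reals_of_real[where 'a=real] by (auto simp: of_real_def)
lemma T_closed: "time_set T \<Longrightarrow> closed T"
  unfolding time_set_def using R_UNIV by auto
lemma T_floor: "time_set T \<Longrightarrow> a \<in> T \<Longrightarrow> of_int k \<in> T"
  unfolding time_set_def by auto

lemma phi_tendsto:
  assumes "cocycle T W \<phi> \<sigma>" "tk \<longlonglongrightarrow> t" "uk \<longlonglongrightarrow> u" "yk \<longlonglongrightarrow> y"
    "\<forall>k. tk k \<in> nonneg_times T \<and> uk k \<in> W" "t \<in> nonneg_times T" "u \<in> W"
  shows "(\<lambda>k. \<phi> (tk k) (uk k) (yk k)) \<longlonglongrightarrow> \<phi> t u y"
proof -
  have c: "continuous_on (nonneg_times T \<times> W \<times> UNIV) (\<lambda>(t, u, y). \<phi> t u y)"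
    using assms(1) unfolding cocycle_def by blast
  have "(\<lambda>k. (tk k, uk k, yk k)) \<longlonglongrightarrow> (t, u, y)"
    by (intro tendsto_Pair assms)
  with c assms(5-7) have "((\<lambda>(t, u, y). \<phi> t u y) \<circ> (\<lambda>k. (tk k, uk k, yk k))) \<longlonglongrightarrow> \<phi> t u y"
    unfolding continuous_on_sequentially by fastforce
  then show ?thesis by (simp add: o_def)
qed

lemma sigma_tendsto:
  assumes "dyn_system T \<sigma>" "tk \<longlonglongrightarrow> t" "yk \<longlonglongrightarrow> y" "\<forall>k. tk k \<in> T" "t \<in> T"
  shows "(\<lambda>k. \<sigma> (tk k) (yk k)) \<longlonglongrightarrow> \<sigma> t y"
proof -
  have c: "continuous_on (T \<times> UNIV) (\<lambda>(t, y). \<sigma> t y)"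
    using assms(1) unfolding dyn_system_def by blast
  have "(\<lambda>k. (tk k, yk k)) \<longlonglongrightarrow> (t, y)"
    by (intro tendsto_Pair assms)
  with c assms(4,5) have "((\<lambda>(t, y). \<sigma> t y) \<circ> (\<lambda>k. (tk k, yk k))) \<longlonglongrightarrow> \<sigma> t y"
    unfolding continuous_on_sequentially by fastforce
  then show ?thesis by (simp add: o_def)
qed

lemma trap:
  fixes u :: "nat \<Rightarrow> real" and F :: "nat \<Rightarrow> real \<Rightarrow> real" and P :: "real \<Rightarrow> real"
    and kn :: "nat \<Rightarrow> nat"
  assumes W: "is_interval W" and uW: "\<forall>n. u n \<in> W" and uS: "\<forall>n. u (Suc n) = F n (u n)"
    and Fm: "\<forall>n. \<forall>a\<in>W. \<forall>b\<in>W. a \<le> b \<longrightarrow> F n a \<le> F n b"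
    and FP: "\<forall>c\<in>W. (\<lambda>n. F n c) \<longlonglongrightarrow> P c"
    and Pc: "continuous_on W P" and vW: "v \<in> W"
    and kn: "filterlim kn at_top sequentially" and lim: "(\<lambda>j. u (kn j)) \<longlonglongrightarrow> v"
  shows "P v \<le> v"
proof (rule ccontr)
  assume "\<not> P v \<le> v"
  hence pv: "P v > v" by simp
  define d where "d = (v + P v) / 2"
  have vd: "v < d" "d < P v" using pv unfolding d_def by auto
  have "\<forall>e>0. \<exists>\<delta>>0. \<forall>c\<in>W. dist c v < \<delta> \<longrightarrow> dist (P c) (P v) < e"
    using Pc vW unfolding continuous_on_iff by blast
  moreover have "P v - d > 0" using vd by simp
  ultimately obtain \<delta> where \<delta>: "\<delta> > 0" "\<forall>c\<in>W. dist c v < \<delta> \<longrightarrow> dist (P c) (P v) < P v - d"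
    by blast
  obtain c where c: "c \<in> W" "c \<le> v" "dist c v < \<delta>" "c < v \<or> (\<forall>w\<in>W. c \<le> w)"
  proof (cases "\<exists>w\<in>W. w < v")
    case True
    then obtain w where w: "w \<in> W" "w < v" by blast
    define c where "c = max w (v - \<delta>/2)"
    have "w \<le> c" "c \<le> v" using w \<delta>(1) unfolding c_def by auto
    then have "c \<in> W" using W w vW unfolding is_interval_1 by blast
    moreover have "c < v" "dist c v < \<delta>" using w \<delta>(1) unfolding c_def dist_real_def by auto
    ultimately show ?thesis using that by auto
  next
    case False
    then show ?thesis using that[of v] vW \<delta>(1) by (auto simp: not_less)
  qed
  have Pcd: "P c > d" using \<delta>(2) c(1,3) by (auto simp: dist_real_def)
  have "\<forall>\<^sub>F n in sequentially. F n c > d"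
    using FP c(1) Pcd order_tendstoD(1) by blast
  then obtain N0 where N0: "\<And>n. n \<ge> N0 \<Longrightarrow> F n c > d"
    unfolding eventually_sequentially by blast
  have ev1: "\<forall>\<^sub>F j in sequentially. c \<le> u (kn j)"
  proof (cases "c < v")
    case True
    then have "\<forall>\<^sub>F j in sequentially. c < u (kn j)" using lim order_tendstoD(1) by blast
    then show ?thesis by (rule eventually_mono) simp
  next
    case False
    then show ?thesis using c(4) uW by auto
  qed
  have ev2: "\<forall>\<^sub>F j in sequentially. N0 \<le> kn j"
    using kn by (simp add: filterlim_at_top)
  obtain j0 where j0: "c \<le> u (kn j0)" "N0 \<le> kn j0"
    using eventually_happens'[OF _ eventually_conj[OF ev1 ev2]] by auto
  define n0 where "n0 = kn j0"
  have trapd: "u (Suc (n0 + m)) > d" for m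
  proof (induction m)
    case 0
    have "F n0 c \<le> F n0 (u n0)" using Fm c(1) uW j0(1) n0_def by blast
    then show ?case using N0[of n0] j0(2) uS n0_def by auto
  next
    case (Suc m)
    have "c \<le> u (Suc (n0 + m))" using Suc c(2) vd by linarith
    then have "F (Suc (n0 + m)) c \<le> F (Suc (n0 + m)) (u (Suc (n0 + m)))" using Fm c(1) uW by blast
    moreover have "F (Suc (n0 + m)) c > d" using N0 j0(2) n0_def by auto
    ultimately show ?case using uS by (metis add_Suc_right less_le_trans)
  qed
  have ev3: "\<forall>\<^sub>F j in sequentially. u (kn j) < d" using lim vd order_tendstoD(2) by blast
  have ev4: "\<forall>\<^sub>F j in sequentially. Suc n0 \<le> kn j"
    using kn by (simp add: filterlim_at_top)
  obtain j where j: "u (kn j) < d" "Suc n0 \<le> kn j"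
    using eventually_happens'[OF _ eventually_conj[OF ev3 ev4]] by auto
  define m where "m = kn j - Suc n0"
  have "kn j = Suc (n0 + m)" using j(2) unfolding m_def by simp
  then have "u (kn j) > d" using trapd[of m] by simp
  then show False using j(1) by simp
qed

lemma periodic_fix:
  assumes T: "time_set T" and coc: "cocycle T W \<phi> \<sigma>" and mon: "monotone_cocycle T W \<phi>"
    and tauT: "\<tau> \<in> T" and taupos: "\<tau> > 0" and vW: "v \<in> W" and Pv: "\<phi> \<tau> v q = v"
    and sq: "\<sigma> \<tau> q = q" and ss: "\<sigma> s q = q" and sT: "s \<in> nonneg_times T"
  shows "\<phi> s v q = v"
proof -
  have cW: "\<forall>t\<in>nonneg_times T. \<forall>u\<in>W. \<forall>y. \<phi> t u y \<in> W"
    and c0: "\<forall>u\<in>W. \<forall>y. \<phi> 0 u y = u"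
    and cc: "\<forall>t\<in>nonneg_times T. \<forall>s\<in>nonneg_times T. \<forall>u\<in>W. \<forall>y.
        \<phi> (t + s) u y = \<phi> t (\<phi> s u y) (\<sigma> s y)"
    using coc unfolding cocycle_def by blast+
  have mn: "\<And>a b t y. a \<in> W \<Longrightarrow> b \<in> W \<Longrightarrow> a \<le> b \<Longrightarrow> t \<in> nonneg_times T \<Longrightarrow> \<phi> t a y \<le> \<phi> t b y"
    by (rule mon[unfolded monotone_cocycle_def, rule_format])
  have tauN: "\<tau> \<in> nonneg_times T" using tauT taupos by (simp add: nonneg_times_def)
  have addN: "a + b \<in> nonneg_times T" if "a \<in> nonneg_times T" "b \<in> nonneg_times T" for a b
    using that T_add[OF T] by (auto simp: nonneg_times_def)
  have multN: "real j * a \<in> nonneg_times T" if "a \<in> nonneg_times T" for a j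
    using that T_nat_mult[OF T] by (auto simp: nonneg_times_def)
  have per: "\<phi> (t + real j * \<tau>) v q = \<phi> t v q" if t: "t \<in> nonneg_times T" for t j
  proof (induction j)
    case 0 then show ?case by simp
  next
    case (Suc j)
    define a where "a = t + real j * \<tau>"
    have aN: "a \<in> nonneg_times T" unfolding a_def using addN multN t tauN by blast
    have "t + real (Suc j) * \<tau> = a + \<tau>" unfolding a_def by (simp add: algebra_simps)
    moreover have "\<phi> (a + \<tau>) v q = \<phi> a v q" using cc aN tauN vW Pv sq by metis
    ultimately have e1: "\<phi> (t + real (Suc j) * \<tau>) v q = \<phi> a v q" by simp
    have IH: "\<phi> a v q = \<phi> t v q" using Suc.IH unfolding a_def .
    show ?case using e1 IH by simp
  qed
  define f where "f = \<phi> s v q"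
  have fW: "f \<in> W" using cW sT vW unfolding f_def by blast
  have shift: "\<phi> (t + s) v q = \<phi> t f q" if "t \<in> nonneg_times T" for t
    using cc that sT vW ss unfolding f_def by metis
  show ?thesis
  proof (cases "s = 0")
    case True then show ?thesis using c0 vW by simp
  next
    case False
    then have spos: "s > 0" using sT by (simp add: nonneg_times_def)
    have up: "f \<le> \<phi> (real (Suc k) * s) v q" if "v \<le> f" for k
    proof (induction k)
      case 0 then show ?case unfolding f_def by simp
    next
      case (Suc k)
      have aN: "real (Suc k) * s \<in> nonneg_times T" using multN sT by blast
      have "real (Suc (Suc k)) * s = real (Suc k) * s + s" by (simp add: algebra_simps)
      then have "\<phi> (real (Suc (Suc k)) * s) v q = \<phi> (real (Suc k) * s) f q"
        using shift aN by simp
      moreover have "\<phi> (real (Suc k) * s) v q \<le> \<phi> (real (Suc k) * s) f q"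
        using mn vW fW that aN by blast
      ultimately show ?case using Suc by simp
    qed
    have down: "\<phi> (real (Suc k) * s) v q \<le> f" if "f \<le> v" for k
    proof (induction k)
      case 0 then show ?case unfolding f_def by simp
    next
      case (Suc k)
      have aN: "real (Suc k) * s \<in> nonneg_times T" using multN sT by blast
      have "real (Suc (Suc k)) * s = real (Suc k) * s + s" by (simp add: algebra_simps)
      then have "\<phi> (real (Suc (Suc k)) * s) v q = \<phi> (real (Suc k) * s) f q"
        using shift aN by simp
      moreover have "\<phi> (real (Suc k) * s) f q \<le> \<phi> (real (Suc k) * s) v q"
        using mn vW fW that aN by blast
      ultimately show ?case using Suc by simp
    qed
    have contpsi: "continuous_on (nonneg_times T) (\<lambda>t. \<phi> t v q)"
      unfolding continuous_on_sequentially
    proof (intro allI ballI impI)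
      fix x :: "nat \<Rightarrow> real" and a assume "a \<in> nonneg_times T" "(\<forall>n. x n \<in> nonneg_times T) \<and> x \<longlonglongrightarrow> a"
      then show "((\<lambda>t. \<phi> t v q) \<circ> x) \<longlonglongrightarrow> \<phi> a v q"
        using phi_tendsto[OF coc, of x a "\<lambda>_. v" v "\<lambda>_. q" q] vW by (simp add: o_def)
    qed
    have approx: "\<exists>k. \<bar>\<phi> (real (Suc k) * s) v q - v\<bar> < e" if e: "e > 0" for e
    proof -
      have zN: "0 \<in> nonneg_times T" using T_zero[OF T] by (simp add: nonneg_times_def)
      obtain d1 where d1: "d1 > 0" "\<forall>t\<in>nonneg_times T. dist t 0 < d1 \<longrightarrow> dist (\<phi> t v q) (\<phi> 0 v q) < e"
        using contpsi zN e unfolding continuous_on_iff by blast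
      obtain d2 where d2: "d2 > 0" "\<forall>t\<in>nonneg_times T. dist t \<tau> < d2 \<longrightarrow> dist (\<phi> t v q) (\<phi> \<tau> v q) < e"
        using contpsi tauN e unfolding continuous_on_iff by blast
      define d where "d = min d1 d2"
      have dpos: "d > 0" using d1 d2 unfolding d_def by simp
      obtain N :: nat where N: "\<tau> / d < real N" using reals_Archimedean2 by blast
      have Npos: "N > 0" using N dpos taupos
        by (metis divide_pos_pos not_gr0 of_nat_0 order.asym)
      have Nd: "\<tau> / real N < d" using N dpos taupos Npos by (simp add: field_simps)
      obtain qq :: int and pp :: "nat \<Rightarrow> int" where qq: "0 < qq"
        and ppi: "\<And>i. i < 1 \<Longrightarrow> \<bar>real_of_int qq * (s / \<tau>) - real_of_int (pp i)\<bar> < 1 / real N"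
        using Dirichlet_approx_simult[OF Npos, of 1 "\<lambda>_. s / \<tau>"] by blast
      have pp: "\<bar>real_of_int qq * (s / \<tau>) - real_of_int (pp (0::nat))\<bar> < 1 / real N"
        using ppi[of 0] by simp
      define h where "h = pp 0"
      define k where "k = nat qq"
      have rk: "real k = real_of_int qq" unfolding k_def using qq by simp
      define r where "r = real k * s - real_of_int h * \<tau>"
      have rT: "r \<in> T" unfolding r_def
        using T_diff[OF T T_nat_mult[OF T] T_int_mult[OF T]] sT tauT by (simp add: nonneg_times_def)
      have "\<bar>r\<bar> = \<tau> * \<bar>real_of_int qq * (s / \<tau>) - real_of_int h\<bar>"
        unfolding r_def rk using taupos by (simp add: abs_mult[symmetric] field_simps)
      also have "\<dots> < \<tau> * (1 / real N)" using mult_strict_left_mono[OF pp taupos] unfolding h_def .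
      finally have rlt: "\<bar>r\<bar> < \<tau> * (1 / real N)" .
      then have rabs: "\<bar>r\<bar> < d" using Nd by simp
      have kpos: "real k * s > 0" using qq spos rk by simp
      have N1: "1 / real N \<le> 1" using Npos by simp
      have "real_of_int qq * (s / \<tau>) > 0" using qq spos taupos by simp
      then have "real_of_int h > -1" using pp N1 unfolding h_def by linarith
      then have h0: "h \<ge> 0" by linarith
      have k1: "k \<ge> 1" using qq unfolding k_def by simp
      have "\<bar>\<phi> (real k * s) v q - v\<bar> < e"
      proof (cases "r \<ge> 0")
        case True
        have rN: "r \<in> nonneg_times T" using True rT by (simp add: nonneg_times_def)
        have "real k * s = r + real (nat h) * \<tau>" unfolding r_def using h0 by simp
        then have "\<phi> (real k * s) v q = \<phi> r v q" using per[OF rN] by simp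
        moreover have "dist r 0 < d1" using rabs unfolding d_def by simp
        ultimately show ?thesis using d1(2) rN c0 vW by (simp add: dist_real_def)
      next
        case False
        have "real_of_int h * \<tau> > 0" using False kpos unfolding r_def by simp
        then have h1: "h \<ge> 1" using taupos by (simp add: zero_less_mult_iff)
        have "r + \<tau> \<ge> 0" using rabs Nd taupos Npos
        proof -
          have "\<tau> / real N \<le> \<tau>" using taupos Npos by (simp add: divide_le_eq)
          moreover have "-r < \<tau> / real N"
          proof -
            show ?thesis using rlt by simp
          qed
          ultimately show ?thesis by linarith
        qed
        then have rN: "r + \<tau> \<in> nonneg_times T" using rT tauT T_add[OF T] by (simp add: nonneg_times_def)
        have "real k * s = (r + \<tau>) + real (nat (h - 1)) * \<tau>" unfolding r_def using h1
          by (simp add: algebra_simps of_nat_diff)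
        then have "\<phi> (real k * s) v q = \<phi> (r + \<tau>) v q" using per[OF rN] by simp
        moreover have "dist (r + \<tau>) \<tau> < d2" using rabs unfolding d_def by (simp add: dist_real_def)
        ultimately show ?thesis using d2(2) rN Pv by (simp add: dist_real_def)
      qed
      moreover have "k = Suc (k - 1)" using k1 by simp
      ultimately show ?thesis by metis
    qed
    show ?thesis
    proof (cases "v \<le> f")
      case True
      have "f \<le> v"
      proof (rule field_le_epsilon)
        fix e :: real assume "e > 0"
        then obtain k where "\<bar>\<phi> (real (Suc k) * s) v q - v\<bar> < e" using approx by blast
        then show "f \<le> v + e" using up[OF True, of k] by linarith
      qed
      then show ?thesis using True unfolding f_def by simp
    next
      case False
      then have fv: "f \<le> v" by simp
      have "v \<le> f"
      proof (rule field_le_epsilon)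
        fix e :: real assume "e > 0"
        then obtain k where "\<bar>\<phi> (real (Suc k) * s) v q - v\<bar> < e" using approx by blast
        then show "v \<le> f + e" using down[OF fv, of k] by linarith
      qed
      then show ?thesis using False by simp
    qed
  qed
qed

lemma cont_neg:
  assumes "continuous_on W (P :: real \<Rightarrow> real)"
  shows "continuous_on (uminus ` W) (\<lambda>c. - P (- c))"
proof -
  have "continuous_on (uminus ` W) (\<lambda>c. P (- c))"
    by (rule continuous_on_compose2[OF assms continuous_on_minus[OF continuous_on_id]]) auto
  then show ?thesis by (rule continuous_on_minus)
qed

lemma trap_rev:
  fixes u :: "nat \<Rightarrow> real" and F :: "nat \<Rightarrow> real \<Rightarrow> real" and P :: "real \<Rightarrow> real"
    and kn :: "nat \<Rightarrow> nat"
  assumes W: "is_interval W" and uW: "\<forall>n. u n \<in> W" and uS: "\<forall>n. u (Suc n) = F n (u n)"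
    and Fm: "\<forall>n. \<forall>a\<in>W. \<forall>b\<in>W. a \<le> b \<longrightarrow> F n a \<le> F n b"
    and FP: "\<forall>c\<in>W. (\<lambda>n. F n c) \<longlonglongrightarrow> P c"
    and Pc: "continuous_on W P" and vW: "v \<in> W"
    and kn: "filterlim kn at_top sequentially" and lim: "(\<lambda>j. u (kn j)) \<longlonglongrightarrow> v"
  shows "P v \<ge> v"
proof -
  have "(\<lambda>c. - P (- c)) (- v) \<le> - v"
  proof (rule trap[where W="uminus ` W" and u="\<lambda>n. - u n" and F="\<lambda>n c. - F n (- c)" and kn=kn])
    show "is_interval (uminus ` W)" using W by simp
    show "\<forall>n. - u n \<in> uminus ` W" using uW by auto
    show "\<forall>n. - u (Suc n) = - F n (- (- u n))" using uS by simp
    show "\<forall>n. \<forall>a\<in>uminus ` W. \<forall>b\<in>uminus ` W. a \<le> b \<longrightarrow> - F n (- a) \<le> - F n (- b)"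
      using Fm by fastforce
    show "\<forall>c\<in>uminus ` W. (\<lambda>n. - F n (- c)) \<longlonglongrightarrow> - P (- c)"
      using FP by (auto intro: tendsto_minus)
    show "continuous_on (uminus ` W) (\<lambda>c. - P (- c))" using cont_neg[OF Pc] .
    show "- v \<in> uminus ` W" using vW by auto
    show "filterlim kn sequentially sequentially" using kn .
    show "(\<lambda>j. - u (kn j)) \<longlonglongrightarrow> - v" using lim by (rule tendsto_minus)
  qed
  then show ?thesis by simp
qed

theorem mainTheorem5:
  fixes T W :: "real set"
    and \<sigma> :: "real \<Rightarrow> 'y::complete_space \<Rightarrow> 'y"
    and \<phi> :: "real \<Rightarrow> real \<Rightarrow> 'y \<Rightarrow> real"
    and \<tau> :: real and x0 :: "real \<times> 'y" and q :: 'y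
  assumes "time_set T"
    and "dyn_system T \<sigma>"
    and "is_interval W"
    and "cocycle T W \<phi> \<sigma>"
    and "monotone_cocycle T W \<phi>"
    and "\<tau> \<in> T" and "\<tau> > 0"
    and "x0 \<in> W \<times> UNIV"
    and "compact (closure ((\<lambda>t. skew_product \<phi> \<sigma> t x0) ` nonneg_times T))"
    and "closure ((\<lambda>t. skew_product \<phi> \<sigma> t x0) ` nonneg_times T) \<subseteq> W \<times> UNIV"
    and "\<sigma> \<tau> q = q"
    and "\<forall>\<epsilon>>0. \<exists>L. \<forall>t\<in>T. t \<ge> L \<longrightarrow> dist (\<sigma> t (snd x0)) (\<sigma> t q) < \<epsilon>"
  shows "discrete_omega_limit \<tau> (skew_product \<phi> \<sigma>) x0
           = omega_limit T (skew_product \<phi> \<sigma>) x0 \<inter> (W \<times> {q})"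
proof -
  note T = assms(1) and dyn = assms(2) and Wi = assms(3) and coc = assms(4) and mon = assms(5)
    and tauT = assms(6) and taupos = assms(7) and x0W = assms(8) and Kc = assms(9) and KW = assms(10)
    and sq = assms(11) and asym = assms(12)
  define \<pi> where "\<pi> = skew_product \<phi> \<sigma>"
  define K where "K = closure ((\<lambda>t. \<pi> t x0) ` nonneg_times T)"
  define u0 where "u0 = fst x0"
  define y0 where "y0 = snd x0"
  have u0W: "u0 \<in> W" using x0W unfolding u0_def by (simp add: mem_Times_iff)
  have pidef: "\<pi> t x = (\<phi> t (fst x) (snd x), \<sigma> t (snd x))" for t x
    unfolding \<pi>_def skew_product_def ..
  have cW: "\<forall>t\<in>nonneg_times T. \<forall>u\<in>W. \<forall>y. \<phi> t u y \<in> W"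
    using coc unfolding cocycle_def by (elim conjE) assumption
  have cc: "\<forall>t\<in>nonneg_times T. \<forall>s\<in>nonneg_times T. \<forall>u\<in>W. \<forall>y.
        \<phi> (t + s) u y = \<phi> t (\<phi> s u y) (\<sigma> s y)"
    using coc unfolding cocycle_def by (elim conjE) assumption
  have sc: "\<forall>t\<in>T. \<forall>s\<in>T. \<forall>y. \<sigma> (t + s) y = \<sigma> t (\<sigma> s y)"
    using dyn unfolding dyn_system_def by (elim conjE) assumption
  have mn: "\<And>a b t y. a \<in> W \<Longrightarrow> b \<in> W \<Longrightarrow> a \<le> b \<Longrightarrow> t \<in> nonneg_times T \<Longrightarrow> \<phi> t a y \<le> \<phi> t b y"
    by (rule mon[unfolded monotone_cocycle_def, rule_format])
  have tauN: "\<tau> \<in> nonneg_times T" using tauT taupos by (simp add: nonneg_times_def)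
  have nN: "real n * \<tau> \<in> nonneg_times T" for n
    using T_nat_mult[OF T tauT] taupos by (simp add: nonneg_times_def)
  have KW': "K \<subseteq> W \<times> UNIV" using KW unfolding K_def \<pi>_def .
  have KWs: "x \<in> K \<Longrightarrow> fst x \<in> W" for x using subsetD[OF KW', of x] by (simp add: mem_Times_iff)
  have trajK: "t \<in> nonneg_times T \<Longrightarrow> \<pi> t x0 \<in> K" for t
    unfolding K_def by (rule subsetD[OF closure_subset], rule imageI)
  have Kcomp: "compact K" using Kc unfolding K_def \<pi>_def .
  have sigq: "\<sigma> (real n * \<tau>) q = q" for n
  proof (induction n)
    case 0 show ?case using dyn unfolding dyn_system_def by simp
  next
    case (Suc n)
    have "real (Suc n) * \<tau> = real n * \<tau> + \<tau>" by (simp add: algebra_simps)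
    moreover have "\<sigma> (real n * \<tau> + \<tau>) q = \<sigma> (real n * \<tau>) (\<sigma> \<tau> q)"
      by (rule sc[rule_format]) (use nN[of n] tauT in \<open>simp_all add: nonneg_times_def\<close>)
    ultimately have "\<sigma> (real (Suc n) * \<tau>) q = \<sigma> (real n * \<tau>) (\<sigma> \<tau> q)" by simp
    then show ?case using sq Suc by simp
  qed
  have big: "\<forall>\<^sub>F j in sequentially. L \<le> real (kn j) * \<tau>"
    if kn: "filterlim (kn :: nat \<Rightarrow> nat) at_top sequentially" for kn L
  proof -
    define M where "M = nat \<lceil>L / \<tau>\<rceil>"
    have "\<forall>\<^sub>F j in sequentially. M \<le> kn j" using kn by (simp add: filterlim_at_top)
    then show ?thesis
    proof (rule eventually_mono)
      fix j assume "M \<le> kn j"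
      then have "real M \<le> real (kn j)" by simp
      then have "L / \<tau> \<le> real (kn j)" using real_nat_ceiling_ge[of "L / \<tau>"] unfolding M_def by linarith
      then show "L \<le> real (kn j) * \<tau>" unfolding pos_divide_le_eq[OF taupos] .
    qed
  qed
  have ylim: "(\<lambda>j. \<sigma> (real (kn j) * \<tau>) y0) \<longlonglongrightarrow> q"
    if kn: "filterlim (kn :: nat \<Rightarrow> nat) at_top sequentially" for kn
    unfolding tendsto_iff
  proof (intro allI impI)
    fix e :: real assume "e > 0"
    then obtain L where L: "\<forall>t\<in>T. t \<ge> L \<longrightarrow> dist (\<sigma> t y0) (\<sigma> t q) < e"
      using asym unfolding y0_def by blast
    show "\<forall>\<^sub>F j in sequentially. dist (\<sigma> (real (kn j) * \<tau>) y0) q < e"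
      using big[OF kn, of L]
    proof (rule eventually_mono)
      fix j assume "L \<le> real (kn j) * \<tau>"
      then show "dist (\<sigma> (real (kn j) * \<tau>) y0) q < e"
        using L nN[of "kn j"] sigq[of "kn j"] by (auto simp: nonneg_times_def)
    qed
  qed
  show ?thesis
  proof
    show "discrete_omega_limit \<tau> (skew_product \<phi> \<sigma>) x0 \<subseteq> omega_limit T (skew_product \<phi> \<sigma>) x0 \<inter> W \<times> {q}"
    proof
      fix p assume "p \<in> discrete_omega_limit \<tau> (skew_product \<phi> \<sigma>) x0"
      then obtain kn where kn: "filterlim kn at_top sequentially"
        and lim: "(\<lambda>n. \<pi> (real (kn n) * \<tau>) x0) \<longlonglongrightarrow> p"
        unfolding discrete_omega_limit_def \<pi>_def by blast
      have flim: "filterlim (\<lambda>n. real (kn n) * \<tau>) at_top sequentially"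
        unfolding filterlim_at_top by (intro allI) (rule big[OF kn])
      have p1: "p \<in> omega_limit T (skew_product \<phi> \<sigma>) x0"
        unfolding omega_limit_def mem_Collect_eq
        apply (rule exI[where x="\<lambda>n. real (kn n) * \<tau>"])
        using lim nN flim unfolding \<pi>_def by simp
      have "p \<in> K" unfolding K_def closure_sequential
        apply (rule exI[where x="\<lambda>n. \<pi> (real (kn n) * \<tau>) x0"])
        using lim nN by blast
      then have p2: "fst p \<in> W" by (rule KWs)
      have "(\<lambda>n. snd (\<pi> (real (kn n) * \<tau>) x0)) \<longlonglongrightarrow> snd p" using lim by (rule tendsto_snd)
      moreover have "(\<lambda>n. snd (\<pi> (real (kn n) * \<tau>) x0)) \<longlonglongrightarrow> q"
        using ylim[OF kn] by (simp add: pidef y0_def)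
      ultimately have "snd p = q" by (rule LIMSEQ_unique)
      then show "p \<in> omega_limit T (skew_product \<phi> \<sigma>) x0 \<inter> W \<times> {q}"
        using p1 p2 by (cases p) auto
    qed
  next
    show "omega_limit T (skew_product \<phi> \<sigma>) x0 \<inter> W \<times> {q} \<subseteq> discrete_omega_limit \<tau> (skew_product \<phi> \<sigma>) x0"
    proof
      fix p assume pA: "p \<in> omega_limit T (skew_product \<phi> \<sigma>) x0 \<inter> W \<times> {q}"
      then obtain tk where tkN: "\<forall>k. tk k \<in> nonneg_times T" and tkinf: "filterlim tk at_top sequentially"
        and tklim: "(\<lambda>k. \<pi> (tk k) x0) \<longlonglongrightarrow> p"
        unfolding omega_limit_def \<pi>_def by blast
      have psnd: "snd p = q" using pA by auto
      define nk where "nk k = nat \<lfloor>tk k / \<tau>\<rfloor>" for k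
      define sk where "sk k = tk k - real (nk k) * \<tau>" for k
      have tk0: "tk k \<ge> 0" for k using tkN by (simp add: nonneg_times_def)
      have nkf: "real (nk k) = real_of_int \<lfloor>tk k / \<tau>\<rfloor>" for k
        unfolding nk_def using tk0[of k] taupos by simp
      have sk_bounds: "0 \<le> sk k \<and> sk k < \<tau>" for k
      proof -
        have a: "real_of_int \<lfloor>tk k / \<tau>\<rfloor> \<le> tk k / \<tau>" by (rule of_int_floor_le)
        have b: "tk k / \<tau> < real_of_int \<lfloor>tk k / \<tau>\<rfloor> + 1" by (rule real_of_int_floor_add_one_gt)
        from a have "real_of_int \<lfloor>tk k / \<tau>\<rfloor> * \<tau> \<le> tk k" unfolding pos_le_divide_eq[OF taupos] .
        moreover from b have "tk k < (real_of_int \<lfloor>tk k / \<tau>\<rfloor> + 1) * \<tau>" unfolding pos_divide_less_eq[OF taupos] .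
        ultimately show ?thesis unfolding sk_def nkf by (simp add: algebra_simps)
      qed
      have skN: "sk k \<in> nonneg_times T" for k
        using sk_bounds[of k] T_diff[OF T _ T_nat_mult[OF T tauT]] tkN
        unfolding sk_def by (auto simp: nonneg_times_def)
      have nkinf: "filterlim nk at_top sequentially"
        unfolding filterlim_at_top
      proof
        fix Z :: nat
        have "\<forall>\<^sub>F k in sequentially. real Z * \<tau> \<le> tk k" using tkinf by (simp add: filterlim_at_top)
        then show "\<forall>\<^sub>F k in sequentially. Z \<le> nk k"
        proof (rule eventually_mono)
          fix k assume "real Z * \<tau> \<le> tk k"
          then have "real Z \<le> tk k / \<tau>" using taupos by (simp add: field_simps)
          then have "int Z \<le> \<lfloor>tk k / \<tau>\<rfloor>" by (simp add: le_floor_iff)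
          then show "Z \<le> nk k" unfolding nk_def by simp
        qed
      qed
      define z where "z k = (sk k, \<pi> (real (nk k) * \<tau>) x0)" for k
      have zin: "\<forall>k. z k \<in> {0..\<tau>} \<times> K" using sk_bounds trajK nN unfolding z_def by (auto simp: less_imp_le)
      have "seq_compact ({0..\<tau>} \<times> K)"
        by (intro compact_imp_seq_compact compact_Times compact_Icc Kcomp)
      then obtain l r where lin: "l \<in> {0..\<tau>} \<times> K" and r: "strict_mono r" and zl: "(z \<circ> r) \<longlonglongrightarrow> l"
        using zin by (metis seq_compactE)
      define s where "s = fst l"
      define p' where "p' = snd l"
      have slim: "(\<lambda>k. sk (r k)) \<longlonglongrightarrow> s"
        using tendsto_fst[OF zl] unfolding s_def z_def by (simp add: o_def)
      have p'lim: "(\<lambda>k. \<pi> (real (nk (r k)) * \<tau>) x0) \<longlonglongrightarrow> p'"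
        using tendsto_snd[OF zl] unfolding p'_def z_def by (simp add: o_def)
      have sT: "s \<in> T" using closed_sequentially[OF T_closed[OF T], of "\<lambda>k. sk (r k)"] skN slim
        by (auto simp: nonneg_times_def)
      have s0: "s \<ge> 0" using lin unfolding s_def by auto
      have sN: "s \<in> nonneg_times T" using sT s0 by (simp add: nonneg_times_def)
      have p'K: "p' \<in> K" using lin unfolding p'_def by auto
      define v where "v = fst p'"
      have vW: "v \<in> W" unfolding v_def by (rule KWs[OF p'K])
      define kn where "kn = nk \<circ> r"
      have kninf: "filterlim kn at_top sequentially"
        unfolding kn_def o_def by (rule filterlim_compose[OF nkinf filterlim_subseq[OF r]])
      have "(\<lambda>k. snd (\<pi> (real (kn k) * \<tau>) x0)) \<longlonglongrightarrow> snd p'"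
        using tendsto_snd[OF p'lim] unfolding kn_def by (simp add: o_def)
      moreover have "(\<lambda>k. snd (\<pi> (real (kn k) * \<tau>) x0)) \<longlonglongrightarrow> q"
        using ylim[OF kninf] by (simp add: pidef y0_def)
      ultimately have p'snd: "snd p' = q" by (rule LIMSEQ_unique)
      have p'eq: "p' = (v, q)" using p'snd unfolding v_def by (cases p') auto
      have p'D: "p' \<in> discrete_omega_limit \<tau> (skew_product \<phi> \<sigma>) x0"
        unfolding discrete_omega_limit_def mem_Collect_eq
        apply (rule exI[where x=kn])
        using kninf p'lim unfolding kn_def \<pi>_def by (simp add: o_def)
      have dec: "\<pi> (tk k) x0 = \<pi> (sk k) (\<pi> (real (nk k) * \<tau>) x0)" for k
      proof -
        have tkeq: "tk k = sk k + real (nk k) * \<tau>" unfolding sk_def by simp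
        have e1: "\<phi> (tk k) u0 y0 = \<phi> (sk k) (\<phi> (real (nk k) * \<tau>) u0 y0) (\<sigma> (real (nk k) * \<tau>) y0)"
          unfolding tkeq by (rule cc[rule_format, OF skN nN u0W])
        have skT: "sk k \<in> T" and nT: "real (nk k) * \<tau> \<in> T"
          using skN[of k] nN[of "nk k"] by (simp_all add: nonneg_times_def)
        have e2: "\<sigma> (tk k) y0 = \<sigma> (sk k) (\<sigma> (real (nk k) * \<tau>) y0)"
          unfolding tkeq by (rule sc[rule_format, OF skT nT])
        show ?thesis using e1 e2 unfolding pidef u0_def y0_def by simp
      qed
      have lim1: "(\<lambda>k. \<pi> (tk (r k)) x0) \<longlonglongrightarrow> \<pi> s p'"
      proof -
        define w where "w k = \<pi> (real (nk (r k)) * \<tau>) x0" for k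
        have wW: "fst (w k) \<in> W" for k unfolding w_def by (rule KWs[OF trajK[OF nN]])
        have wl: "w \<longlonglongrightarrow> p'" using p'lim unfolding w_def .
        have a: "(\<lambda>k. \<phi> (sk (r k)) (fst (w k)) (snd (w k))) \<longlonglongrightarrow> \<phi> s (fst p') (snd p')"
          by (rule phi_tendsto[OF coc slim tendsto_fst[OF wl] tendsto_snd[OF wl]])
            (use skN wW sN vW v_def in auto)
        have b: "(\<lambda>k. \<sigma> (sk (r k)) (snd (w k))) \<longlonglongrightarrow> \<sigma> s (snd p')"
          by (rule sigma_tendsto[OF dyn slim tendsto_snd[OF wl]])
            (use skN sT in \<open>auto simp: nonneg_times_def\<close>)
        have "(\<lambda>k. \<pi> (sk (r k)) (w k)) \<longlonglongrightarrow> \<pi> s p'"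
          unfolding pidef by (rule tendsto_Pair[OF a b])
        then show ?thesis using dec unfolding w_def by simp
      qed
      have "(\<lambda>k. \<pi> (tk (r k)) x0) \<longlonglongrightarrow> p"
        using LIMSEQ_subseq_LIMSEQ[OF tklim r] by (simp add: o_def)
      then have peq: "p = \<pi> s p'" using lim1 by (rule LIMSEQ_unique)
      then have pexp: "p = (\<phi> s v q, \<sigma> s q)" using p'eq pidef by simp
      have ssq: "\<sigma> s q = q" using pexp psnd by simp
      define u where "u n = \<phi> (real n * \<tau>) u0 y0" for n
      define F where "F n c = \<phi> \<tau> c (\<sigma> (real n * \<tau>) y0)" for n c
      define P where "P c = \<phi> \<tau> c q" for c
      have uW: "\<forall>n. u n \<in> W" unfolding u_def using cW nN u0W by blast
      have uS: "\<forall>n. u (Suc n) = F n (u n)"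
      proof
        fix n
        have "real (Suc n) * \<tau> = \<tau> + real n * \<tau>" by (simp add: algebra_simps)
        then show "u (Suc n) = F n (u n)" unfolding u_def F_def by (simp only: cc[rule_format, OF tauN nN u0W])
      qed
      have Fm: "\<forall>n. \<forall>a\<in>W. \<forall>b\<in>W. a \<le> b \<longrightarrow> F n a \<le> F n b"
        unfolding F_def using mn tauN by blast
      have FP: "\<forall>c\<in>W. (\<lambda>n. F n c) \<longlonglongrightarrow> P c"
      proof
        fix c assume "c \<in> W"
        then show "(\<lambda>n. F n c) \<longlonglongrightarrow> P c" unfolding F_def P_def
          using phi_tendsto[OF coc tendsto_const tendsto_const ylim[OF filterlim_ident]] tauN
          by auto
      qed
      have Pc: "continuous_on W P"
        unfolding continuous_on_sequentially
      proof (intro allI ballI impI)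
        fix x :: "nat \<Rightarrow> real" and a assume "a \<in> W" "(\<forall>n. x n \<in> W) \<and> x \<longlonglongrightarrow> a"
        then show "(P \<circ> x) \<longlonglongrightarrow> P a"
          using phi_tendsto[OF coc tendsto_const, of x a "\<lambda>_. q" q \<tau>] tauN unfolding P_def by (simp add: o_def)
      qed
      have ulim: "(\<lambda>j. u (kn j)) \<longlonglongrightarrow> v"
        using tendsto_fst[OF p'lim] unfolding u_def kn_def v_def by (simp add: o_def pidef u0_def y0_def)
      have "P v \<le> v" by (rule trap[OF Wi uW uS Fm FP Pc vW kninf ulim])
      moreover have "P v \<ge> v" by (rule trap_rev[OF Wi uW uS Fm FP Pc vW kninf ulim])
      ultimately have Pv: "\<phi> \<tau> v q = v" unfolding P_def by simp
      have "\<phi> s v q = v" by (rule periodic_fix[OF T coc mon tauT taupos vW Pv sq ssq sN])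
      then have "p = p'" using pexp ssq p'eq by simp
      then show "p \<in> discrete_omega_limit \<tau> (skew_product \<phi> \<sigma>) x0" using p'D by simp
    qed
  qed
qed

end
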